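(* Let $W^{(1)}$ be a pro-$p$ Coxeter group (notation as in the context) and let $M$ be a group (not necessarily commutative) endowed with an action of $W^{(1)}$ by group automorphisms, written $(g,m)\mapsto g(m)$. For a group $G$ acting on $M$ let $Z^1(G,M)$ be the set of maps $\phi:G\to M$ with $\phi(gg')=\phi(g)\,g(\phi(g'))$ for all $g,g'\in G$. Then the restriction map \[ Z^1(W^{(1)},M)\longrightarrow \mathrm{Hom}_{\mathrm{Set}}(S,M)\times Z^1(\Omega^{(1)},M),\qquad \phi\mapsto \big((s\mapsto \phi(n_s)),\ (u\mapsto\phi(u))\big) \] is injective, and its image consists exactly of the pairs $(\sigma,\rho)$ satisfying: (i) $\sigma(s)\, n_s(\sigma(s))=\rho(n_s^2)$ for all $s\in S$ (note $n_s^2\in T\subseteq\Omega^{(1)}$); (ii) for all $u\in\Omega^{(1)}$ and $s\in S$, \[ \rho(u)\cdot u(\sigma(s))=\sigma(u(s))\cdot n_{u(s)}\big(\rho(u\,t_{s,u})\big), \] where $u(s):=\pi(u)s\pi(u)^{-1}\in S$ and $t_{s,u}\in T$ is the element defined by $u n_s=n_{u(s)}\,u\,t_{s,u}$; (iii) for all $s,t\in S$ with $m(s,t)<\infty$, the following two products, each with $m(s,t)$ factors, are equal: \[ \sigma(s)\cdot n_s(\sigma(t))\cdot (n_sn_t)(\sigma(s))\cdot(n_sn_tn_s)(\sigma(t))\cdots = \sigma(t)\cdot n_t(\sigma(s))\cdot(n_tn_s)(\sigma(t))\cdot(n_tn_sn_t)(\sigma(s))\cdots . \]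
   Context: A Coxeter group $(W_{\mathrm{aff}},S)$ has length function $\ell$ with respect to $S$, and $m(s,t)\in\{1,2,\dots,\infty\}$ denotes the order of $st$. An extended Coxeter group is a group $W=W_{\mathrm{aff}}\rtimes\Omega$ where $W_{\mathrm{aff}}$ is a normal subgroup, $(W_{\mathrm{aff}},S)$ is a Coxeter group, and $\Omega\le W$ is a subgroup whose conjugation action on $W_{\mathrm{aff}}$ preserves $S$; the length is extended to $W$ by $\ell(wu)=\ell(w)$ for $w\in W_{\mathrm{aff}},u\in\Omega$. A pro-$p$ Coxeter group $W^{(1)}$ consists of an extended Coxeter group $W$, an abelian group $T$, a group extension $1\to T\to W^{(1)}\xrightarrow{\pi}W\to1$ (with $T\subseteq W^{(1)}$), and elements $n_s\in\pi^{-1}(s)$ for $s\in S$ satisfying the braid relations $n_sn_tn_s\cdots=n_tn_sn_t\cdots$ ($m(s,t)$ factors on each side) whenever $m(s,t)<\infty$. We write $\Omega^{(1)}:=\pi^{-1}(\Omega)$. *)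

theory Defs
  imports "HOL-Algebra.Algebra"
begin

definition mprod :: "('a, 'b) monoid_scheme \<Rightarrow> 'a list \<Rightarrow> 'a" where
  "mprod G xs = foldr (\<lambda>x y. x \<otimes>\<^bsub>G\<^esub> y) xs \<one>\<^bsub>G\<^esub>"

fun alt :: "'a \<Rightarrow> 'a \<Rightarrow> nat \<Rightarrow> 'a list" where
  "alt s t 0 = []"
| "alt s t (Suc k) = s # alt t s k"

text \<open>m(s,t) = order of s t; the value 0 encodes infinity (convention of group.ord).\<close>
definition mcox :: "('a, 'b) monoid_scheme \<Rightarrow> 'a \<Rightarrow> 'a \<Rightarrow> nat" where
  "mcox G s t = group.ord G (s \<otimes>\<^bsub>G\<^esub> t)"

text \<open>Congruence on words in S generated by the Coxeter relations
  s s = 1 and the braid relations (m(s,t) factors each side, m(s,t) finite).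
  Together with s^2 = 1 this is the Coxeter presentation.\<close>
inductive cox_equiv :: "('a, 'b) monoid_scheme \<Rightarrow> 'a set \<Rightarrow> 'a list \<Rightarrow> 'a list \<Rightarrow> bool"
  for G S where
  refl: "cox_equiv G S w w"
| sym: "cox_equiv G S u v \<Longrightarrow> cox_equiv G S v u"
| trans: "cox_equiv G S u v \<Longrightarrow> cox_equiv G S v w \<Longrightarrow> cox_equiv G S u w"
| del: "s \<in> S \<Longrightarrow> cox_equiv G S (u @ [s, s] @ v) (u @ v)"
| braid: "s \<in> S \<Longrightarrow> t \<in> S \<Longrightarrow> mcox G s t \<noteq> 0 \<Longrightarrow>
     cox_equiv G S (u @ alt s t (mcox G s t) @ v) (u @ alt t s (mcox G s t) @ v)"

text \<open>(G,S) is a Coxeter system: S generates G and G has the presentation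
  < S | (s t)^{m(s,t)} = 1 >, i.e. two words in S have the same product in G
  iff they are related by the defining relations.\<close>
definition coxeter_system :: "('a, 'b) monoid_scheme \<Rightarrow> 'a set \<Rightarrow> bool" where
  "coxeter_system G S \<longleftrightarrow> group G \<and> S \<subseteq> carrier G \<and> generate G S = carrier G \<and>
     (\<forall>u v. set u \<subseteq> S \<longrightarrow> set v \<subseteq> S \<longrightarrow> (mprod G u = mprod G v \<longleftrightarrow> cox_equiv G S u v))"

definition ext_coxeter :: "('a, 'b) monoid_scheme \<Rightarrow> 'a set \<Rightarrow> 'a set \<Rightarrow> 'a set \<Rightarrow> bool" where
  "ext_coxeter W Waff S \<Omega> \<longleftrightarrow> group W \<and> Waff \<lhd> W \<and> subgroup \<Omega> W \<and>
     Waff \<inter> \<Omega> = {\<one>\<^bsub>W\<^esub>} \<and> Waff <#>\<^bsub>W\<^esub> \<Omega> = carrier W \<and>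
     coxeter_system (W\<lparr>carrier := Waff\<rparr>) S \<and>
     (\<forall>u\<in>\<Omega>. \<forall>s\<in>S. u \<otimes>\<^bsub>W\<^esub> s \<otimes>\<^bsub>W\<^esub> inv\<^bsub>W\<^esub> u \<in> S)"

definition pro_p_coxeter ::
  "('g, 'c) monoid_scheme \<Rightarrow> ('w, 'd) monoid_scheme \<Rightarrow> 'w set \<Rightarrow> 'w set \<Rightarrow> 'w set \<Rightarrow>
   'g set \<Rightarrow> ('g \<Rightarrow> 'w) \<Rightarrow> ('w \<Rightarrow> 'g) \<Rightarrow> bool" where
  "pro_p_coxeter W1 W Waff S \<Omega> T \<pi> n \<longleftrightarrow>
     ext_coxeter W Waff S \<Omega> \<and> group W1 \<and>
     subgroup T W1 \<and> (\<forall>x\<in>T. \<forall>y\<in>T. x \<otimes>\<^bsub>W1\<^esub> y = y \<otimes>\<^bsub>W1\<^esub> x) \<and>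
     \<pi> \<in> hom W1 W \<and> \<pi> ` carrier W1 = carrier W \<and> kernel W1 W \<pi> = T \<and>
     (\<forall>s\<in>S. n s \<in> carrier W1 \<and> \<pi> (n s) = s) \<and>
     (\<forall>s\<in>S. \<forall>t\<in>S. mcox W s t \<noteq> 0 \<longrightarrow>
        mprod W1 (map n (alt s t (mcox W s t))) = mprod W1 (map n (alt t s (mcox W s t))))"

definition aut_action :: "('g, 'c) monoid_scheme \<Rightarrow> ('m, 'e) monoid_scheme \<Rightarrow> ('g \<Rightarrow> 'm \<Rightarrow> 'm) \<Rightarrow> bool" where
  "aut_action G M act \<longleftrightarrow>
     (\<forall>g\<in>carrier G. act g \<in> iso M M) \<and>
     (\<forall>m\<in>carrier M. act \<one>\<^bsub>G\<^esub> m = m) \<and>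
     (\<forall>g\<in>carrier G. \<forall>h\<in>carrier G. \<forall>m\<in>carrier M. act (g \<otimes>\<^bsub>G\<^esub> h) m = act g (act h m))"

definition Z1 :: "('g, 'c) monoid_scheme \<Rightarrow> 'g set \<Rightarrow> ('m, 'e) monoid_scheme \<Rightarrow> ('g \<Rightarrow> 'm \<Rightarrow> 'm) \<Rightarrow> ('g \<Rightarrow> 'm) set" where
  "Z1 G H M act = {\<phi> \<in> H \<rightarrow>\<^sub>E carrier M.
     \<forall>g\<in>H. \<forall>g'\<in>H. \<phi> (g \<otimes>\<^bsub>G\<^esub> g') = \<phi> g \<otimes>\<^bsub>M\<^esub> act g (\<phi> g')}"

end

theory Submission imports Defs begin

fun sig :: "('m, 'e) monoid_scheme \<Rightarrow> ('g \<Rightarrow> 'm \<Rightarrow> 'm) \<Rightarrow> ('w \<Rightarrow> 'g) \<Rightarrow> ('w \<Rightarrow> 'm) \<Rightarrow> 'w list \<Rightarrow> 'm" where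
  "sig M act n \<sigma> [] = \<one>\<^bsub>M\<^esub>"
| "sig M act n \<sigma> (s # w) = \<sigma> s \<otimes>\<^bsub>M\<^esub> act (n s) (sig M act n \<sigma> w)"

lemma mprod_Nil[simp]: "mprod G [] = \<one>\<^bsub>G\<^esub>" by (simp add: mprod_def)
lemma mprod_Cons[simp]: "mprod G (x # xs) = x \<otimes>\<^bsub>G\<^esub> mprod G xs" by (simp add: mprod_def)

locale base = W1: group W1 + W: group W + M: group M + pi: group_hom W1 W \<pi>
  for W1 :: "('g, 'c) monoid_scheme" and W :: "('w, 'd) monoid_scheme"
    and M :: "('m, 'e) monoid_scheme" and \<pi> :: "'g \<Rightarrow> 'w" +
  fixes Waff S \<Omega> :: "'w set" and n :: "'w \<Rightarrow> 'g" and act :: "'g \<Rightarrow> 'm \<Rightarrow> 'm"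
  assumes pi_surj: "\<pi> ` carrier W1 = carrier W"
    and Waff_sub: "subgroup Waff W" and Om_sub: "subgroup \<Omega> W"
    and inter: "Waff \<inter> \<Omega> = {\<one>\<^bsub>W\<^esub>}" and prod: "Waff <#>\<^bsub>W\<^esub> \<Omega> = carrier W"
    and cox: "coxeter_system (W\<lparr>carrier := Waff\<rparr>) S"
    and conj: "\<forall>u\<in>\<Omega>. \<forall>s\<in>S. u \<otimes>\<^bsub>W\<^esub> s \<otimes>\<^bsub>W\<^esub> inv\<^bsub>W\<^esub> u \<in> S"
    and nS: "\<forall>s\<in>S. n s \<in> carrier W1 \<and> \<pi> (n s) = s"
    and braidn: "\<forall>s\<in>S. \<forall>t\<in>S. mcox W s t \<noteq> 0 \<longrightarrow>
        mprod W1 (map n (alt s t (mcox W s t))) = mprod W1 (map n (alt t s (mcox W s t)))"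
    and act: "aut_action W1 M act"
begin

definition Om1 where "Om1 = {g \<in> carrier W1. \<pi> g \<in> \<Omega>}"
abbreviation nw where "nw w \<equiv> mprod W1 (map n w)"
definition cw where "cw u b = map (\<lambda>s. \<pi> u \<otimes>\<^bsub>W\<^esub> s \<otimes>\<^bsub>W\<^esub> inv\<^bsub>W\<^esub> (\<pi> u)) b"

lemma Waff_W: "Waff \<subseteq> carrier W" using Waff_sub subgroup.subset by blast
lemma Om_W: "\<Omega> \<subseteq> carrier W" using Om_sub subgroup.subset by blast
lemma S_Waff: "S \<subseteq> Waff" using cox unfolding coxeter_system_def by auto
lemma S_W: "S \<subseteq> carrier W" using S_Waff Waff_W by blast
lemma nS_c[simp]: "s \<in> S \<Longrightarrow> n s \<in> carrier W1" using nS by auto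
lemma pi_nS[simp]: "s \<in> S \<Longrightarrow> \<pi> (n s) = s" using nS by auto
lemma S_c[simp]: "s \<in> S \<Longrightarrow> s \<in> carrier W" using S_W by auto

lemma act_hom: "g \<in> carrier W1 \<Longrightarrow> act g \<in> hom M M"
  using act unfolding aut_action_def iso_def by auto
lemma act_c[simp]: "g \<in> carrier W1 \<Longrightarrow> x \<in> carrier M \<Longrightarrow> act g x \<in> carrier M"
  using act_hom by (auto simp: hom_def)
lemma act_mult[simp]: "g \<in> carrier W1 \<Longrightarrow> x \<in> carrier M \<Longrightarrow> y \<in> carrier M \<Longrightarrow>
   act g (x \<otimes>\<^bsub>M\<^esub> y) = act g x \<otimes>\<^bsub>M\<^esub> act g y"
  using act_hom by (auto simp: hom_def)
lemma act_one[simp]: "g \<in> carrier W1 \<Longrightarrow> act g \<one>\<^bsub>M\<^esub> = \<one>\<^bsub>M\<^esub>"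
  using act_hom[of g] group_hom.hom_one[of M M "act g"] M.group_axioms
  by (simp add: group_hom_axioms_def group_hom_def)
lemma act_id[simp]: "x \<in> carrier M \<Longrightarrow> act \<one>\<^bsub>W1\<^esub> x = x"
  using act unfolding aut_action_def by auto
lemma act_comp: "g \<in> carrier W1 \<Longrightarrow> h \<in> carrier W1 \<Longrightarrow> x \<in> carrier M \<Longrightarrow>
   act (g \<otimes>\<^bsub>W1\<^esub> h) x = act g (act h x)"
  using act unfolding aut_action_def by auto

lemma nw_c[simp]: "set w \<subseteq> S \<Longrightarrow> nw w \<in> carrier W1"
  by (induction w) auto
lemma nw_Cons[simp]: "nw (s # w) = n s \<otimes>\<^bsub>W1\<^esub> nw w"
  by simp
lemma nw_Nil[simp]: "nw [] = \<one>\<^bsub>W1\<^esub>"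
  by simp
lemma nw_append: "set a \<subseteq> S \<Longrightarrow> set b \<subseteq> S \<Longrightarrow> nw (a @ b) = nw a \<otimes>\<^bsub>W1\<^esub> nw b"
  by (induction a) (auto simp: W1.m_assoc)

lemma mprodW_c[simp]: "set w \<subseteq> S \<Longrightarrow> mprod W w \<in> carrier W"
  by (induction w) auto
lemma mprodW_Waff: "set w \<subseteq> S \<Longrightarrow> mprod W w \<in> Waff"
  using S_Waff Waff_sub
  by (induction w) (auto simp: subgroup.m_closed subgroup.one_closed)
lemma pi_nw[simp]: "set w \<subseteq> S \<Longrightarrow> \<pi> (nw w) = mprod W w"
proof (induction w)
  case (Cons a w)
  then show ?case using nw_c[of w] by (simp add: pi.hom_mult)
qed simp

lemma mprod_sub: "mprod (W\<lparr>carrier := Waff\<rparr>) w = mprod W w"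
  by (simp add: mprod_def)
lemma mcox_sub: "mcox (W\<lparr>carrier := Waff\<rparr>) s t = mcox W s t"
proof -
  have g: "group (W\<lparr>carrier := Waff\<rparr>)" using cox unfolding coxeter_system_def by blast
  show ?thesis unfolding mcox_def group.ord_def[OF g] group.ord_def[OF W.group_axioms]
    by (simp add: nat_pow_def)
qed

lemma cox_iff: "set u \<subseteq> S \<Longrightarrow> set v \<subseteq> S \<Longrightarrow>
   (mprod W u = mprod W v) = cox_equiv (W\<lparr>carrier := Waff\<rparr>) S u v"
  using cox unfolding coxeter_system_def mprod_sub by blast

lemma ss_one: "s \<in> S \<Longrightarrow> s \<otimes>\<^bsub>W\<^esub> s = \<one>\<^bsub>W\<^esub>"
proof -
  assume s: "s \<in> S"
  have "cox_equiv (W\<lparr>carrier := Waff\<rparr>) S ([] @ [s, s] @ []) ([] @ [])"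
    by (rule cox_equiv.del[OF s])
  then have "mprod W [s, s] = mprod W []" using cox_iff[of "[s,s]" "[]"] s by simp
  then show ?thesis using s by simp
qed

lemma cox_set: "cox_equiv G S u v \<Longrightarrow> (set u \<subseteq> S) = (set v \<subseteq> S)"
proof (induction rule: cox_equiv.induct)
  case (braid s t u v)
  have "set (alt s t m) \<subseteq> S" "set (alt t s m) \<subseteq> S" for m
    using braid.hyps(1,2) by (induction m arbitrary: s t) auto
  then show ?case by auto
qed auto

lemma word_exists: "a \<in> Waff \<Longrightarrow> \<exists>w. set w \<subseteq> S \<and> mprod W w = a"
proof -
  assume "a \<in> Waff"
  then have "a \<in> generate (W\<lparr>carrier := Waff\<rparr>) S" using cox unfolding coxeter_system_def by auto
  then show ?thesis
  proof (induction rule: generate.induct)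
    case one
    then show ?case by (intro exI[of _ "[]"]) simp
  next
    case (incl h)
    then show ?case by (intro exI[of _ "[h]"]) simp
  next
    case (inv h)
    have "h \<in> Waff" using inv S_Waff by auto
    then have "inv\<^bsub>W\<lparr>carrier := Waff\<rparr>\<^esub> h = inv\<^bsub>W\<^esub> h" using W.m_inv_consistent Waff_sub by blast
    also have "\<dots> = h" using W.inv_equality[OF ss_one[OF inv]] inv by simp
    finally show ?case using inv by (intro exI[of _ "[h]"]) simp
  next
    case (eng h1 h2)
    then obtain w1 w2 where "set w1 \<subseteq> S" "mprod W w1 = h1" "set w2 \<subseteq> S" "mprod W w2 = h2" by blast
    moreover have "set w1 \<subseteq> S \<Longrightarrow> mprod W (w1 @ w2) = mprod W w1 \<otimes>\<^bsub>W\<^esub> mprod W w2" if "set w2 \<subseteq> S"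
      using that by (induction w1) (auto simp: W.m_assoc)
    ultimately show ?case by (intro exI[of _ "w1 @ w2"]) auto
  qed
qed


lemma Om1_I: "g \<in> carrier W1 \<Longrightarrow> \<pi> g \<in> \<Omega> \<Longrightarrow> g \<in> Om1" by (simp add: Om1_def)
lemma Om1_c: "u \<in> Om1 \<Longrightarrow> u \<in> carrier W1" by (simp add: Om1_def)
lemma Om1_pi: "u \<in> Om1 \<Longrightarrow> \<pi> u \<in> \<Omega>" by (simp add: Om1_def)
lemma pi_Om1_c[simp]: "u \<in> Om1 \<Longrightarrow> \<pi> u \<in> carrier W" using Om1_pi Om_W by blast
lemma Om1_one[simp]: "\<one>\<^bsub>W1\<^esub> \<in> Om1"
  using Om_sub by (simp add: Om1_def subgroup.one_closed)
lemma Om1_mult[simp]: "u \<in> Om1 \<Longrightarrow> v \<in> Om1 \<Longrightarrow> u \<otimes>\<^bsub>W1\<^esub> v \<in> Om1"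
  using Om_sub by (simp add: Om1_def pi.hom_mult subgroup.m_closed)
lemma Om1_inv[simp]: "u \<in> Om1 \<Longrightarrow> inv\<^bsub>W1\<^esub> u \<in> Om1"
  using Om_sub by (simp add: Om1_def pi.hom_inv subgroup.m_inv_closed)
lemma Om1_ker: "g \<in> carrier W1 \<Longrightarrow> \<pi> g = \<one>\<^bsub>W\<^esub> \<Longrightarrow> g \<in> Om1"
  using Om_sub by (simp add: Om1_def subgroup.one_closed)

lemma decomp: "g \<in> carrier W1 \<Longrightarrow> \<exists>w u. set w \<subseteq> S \<and> u \<in> Om1 \<and> g = nw w \<otimes>\<^bsub>W1\<^esub> u"
proof -
  assume g: "g \<in> carrier W1"
  then have "\<pi> g \<in> Waff <#>\<^bsub>W\<^esub> \<Omega>" using prod by auto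
  then obtain a x where a: "a \<in> Waff" and o: "x \<in> \<Omega>" and e: "\<pi> g = a \<otimes>\<^bsub>W\<^esub> x"
    unfolding set_mult_def by auto
  obtain w where w: "set w \<subseteq> S" "mprod W w = a" using word_exists[OF a] by blast
  define u where "u = inv\<^bsub>W1\<^esub> (nw w) \<otimes>\<^bsub>W1\<^esub> g"
  have uc: "u \<in> carrier W1" using g w by (simp add: u_def)
  have aW: "a \<in> carrier W" "x \<in> carrier W" using a o Waff_W Om_W by auto
  have "\<pi> u = inv\<^bsub>W\<^esub> a \<otimes>\<^bsub>W\<^esub> (a \<otimes>\<^bsub>W\<^esub> x)"
    using g w by (simp add: u_def pi.hom_mult pi.hom_inv e)
  also have "\<dots> = x" using aW by (simp add: W.m_assoc[symmetric])
  finally have "u \<in> Om1" using uc o by (simp add: Om1_def)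
  moreover have "g = nw w \<otimes>\<^bsub>W1\<^esub> u" using g w
    by (simp add: u_def W1.m_assoc[symmetric])
  ultimately show ?thesis using w by blast
qed

lemma waff_unique:
  assumes "a \<in> Waff" "a' \<in> Waff" "x \<in> \<Omega>" "x' \<in> \<Omega>" "a \<otimes>\<^bsub>W\<^esub> x = a' \<otimes>\<^bsub>W\<^esub> x'"
  shows "a = a'"
proof -
  have c: "a \<in> carrier W" "a' \<in> carrier W" "x \<in> carrier W" "x' \<in> carrier W"
    using assms Waff_W Om_W by auto
  have "inv\<^bsub>W\<^esub> a' \<otimes>\<^bsub>W\<^esub> a = x' \<otimes>\<^bsub>W\<^esub> inv\<^bsub>W\<^esub> x"
  proof -
    have "inv\<^bsub>W\<^esub> a' \<otimes>\<^bsub>W\<^esub> a = inv\<^bsub>W\<^esub> a' \<otimes>\<^bsub>W\<^esub> (a \<otimes>\<^bsub>W\<^esub> x) \<otimes>\<^bsub>W\<^esub> inv\<^bsub>W\<^esub> x"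
      using c by (simp add: W.m_assoc)
    also have "\<dots> = inv\<^bsub>W\<^esub> a' \<otimes>\<^bsub>W\<^esub> (a' \<otimes>\<^bsub>W\<^esub> x') \<otimes>\<^bsub>W\<^esub> inv\<^bsub>W\<^esub> x"
      using assms(5) by simp
    also have "\<dots> = x' \<otimes>\<^bsub>W\<^esub> inv\<^bsub>W\<^esub> x"
      using c by (simp add: W.m_assoc[symmetric])
    finally show ?thesis .
  qed
  moreover have "inv\<^bsub>W\<^esub> a' \<otimes>\<^bsub>W\<^esub> a \<in> Waff" using assms Waff_sub
    by (simp add: subgroup.m_closed subgroup.m_inv_closed)
  moreover have "x' \<otimes>\<^bsub>W\<^esub> inv\<^bsub>W\<^esub> x \<in> \<Omega>" using assms Om_sub
    by (simp add: subgroup.m_closed subgroup.m_inv_closed)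
  ultimately have "inv\<^bsub>W\<^esub> a' \<otimes>\<^bsub>W\<^esub> a = \<one>\<^bsub>W\<^esub>" using inter by auto
  then have "a = a' \<otimes>\<^bsub>W\<^esub> \<one>\<^bsub>W\<^esub>" using c W.inv_solve_left' by blast
  then show ?thesis using c by simp
qed

lemma conj_S: "u \<in> Om1 \<Longrightarrow> s \<in> S \<Longrightarrow> \<pi> u \<otimes>\<^bsub>W\<^esub> s \<otimes>\<^bsub>W\<^esub> inv\<^bsub>W\<^esub> (\<pi> u) \<in> S"
  using conj Om1_pi by blast
lemma cw_S: "u \<in> Om1 \<Longrightarrow> set b \<subseteq> S \<Longrightarrow> set (cw u b) \<subseteq> S"
  using conj_S by (auto simp: cw_def)
lemma cw_Nil[simp]: "cw u [] = []" by (simp add: cw_def)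
lemma cw_Cons[simp]: "cw u (s # b) = (\<pi> u \<otimes>\<^bsub>W\<^esub> s \<otimes>\<^bsub>W\<^esub> inv\<^bsub>W\<^esub> (\<pi> u)) # cw u b" by (simp add: cw_def)
lemma mprod_cw: "u \<in> Om1 \<Longrightarrow> set b \<subseteq> S \<Longrightarrow>
   mprod W (cw u b) = \<pi> u \<otimes>\<^bsub>W\<^esub> mprod W b \<otimes>\<^bsub>W\<^esub> inv\<^bsub>W\<^esub> (\<pi> u)"
proof (induction b)
  case Nil
  then show ?case using pi_Om1_c[of u] by simp
next
  case (Cons s b)
  have pu: "\<pi> u \<in> carrier W" using Cons.prems by simp
  have sc: "s \<in> carrier W" "mprod W b \<in> carrier W" using Cons.prems by auto
  have "mprod W (cw u (s # b)) = \<pi> u \<otimes>\<^bsub>W\<^esub> s \<otimes>\<^bsub>W\<^esub> inv\<^bsub>W\<^esub> (\<pi> u) \<otimes>\<^bsub>W\<^esub> (\<pi> u \<otimes>\<^bsub>W\<^esub> mprod W b \<otimes>\<^bsub>W\<^esub> inv\<^bsub>W\<^esub> (\<pi> u))"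
    using Cons by simp
  also have "\<dots> = \<pi> u \<otimes>\<^bsub>W\<^esub> (s \<otimes>\<^bsub>W\<^esub> mprod W b) \<otimes>\<^bsub>W\<^esub> inv\<^bsub>W\<^esub> (\<pi> u)"
    using pu sc by (simp add: W.m_assoc[symmetric]) (simp add: W.m_assoc)
  finally show ?case by simp
qed

lemma mprod_act: "g \<in> carrier W1 \<Longrightarrow> set xs \<subseteq> carrier M \<Longrightarrow>
   mprod M (map (act g) xs) = act g (mprod M xs)"
proof (induction xs)
  case (Cons x xs)
  have "mprod M xs \<in> carrier M" using Cons.prems
    by (induction xs) auto
  then show ?case using Cons by simp
qed simp

context
  fixes \<sigma> :: "'w \<Rightarrow> 'm"
  assumes sc: "\<forall>s\<in>S. \<sigma> s \<in> carrier M"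
begin
lemma sig_c[simp]: "set w \<subseteq> S \<Longrightarrow> sig M act n \<sigma> w \<in> carrier M"
  using sc by (induction w) auto

lemma sig_append: "set a \<subseteq> S \<Longrightarrow> set b \<subseteq> S \<Longrightarrow>
   sig M act n \<sigma> (a @ b) = sig M act n \<sigma> a \<otimes>\<^bsub>M\<^esub> act (nw a) (sig M act n \<sigma> b)"
  using sc by (induction a) (auto simp: M.m_assoc act_comp)

lemma sig_expand: "set w \<subseteq> S \<Longrightarrow> sig M act n \<sigma> w =
   mprod M (map (\<lambda>k. act (nw (take k w)) (\<sigma> (w ! k))) [0..<length w])"
proof (induction w)
  case Nil
  then show ?case by simp
next
  case (Cons s w)
  have "[0..<length (s # w)] = 0 # map Suc [0..<length w]"
    by (simp only: length_Cons map_Suc_upt upt_conv_Cons[OF zero_less_Suc])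
  then have "mprod M (map (\<lambda>k. act (nw (take k (s # w))) (\<sigma> ((s # w) ! k))) [0..<length (s # w)])
     = \<sigma> s \<otimes>\<^bsub>M\<^esub> mprod M (map (\<lambda>k. act (n s \<otimes>\<^bsub>W1\<^esub> nw (take k w)) (\<sigma> (w ! k))) [0..<length w])"
    using Cons.prems sc by (simp add: comp_def)
  also have "map (\<lambda>k. act (n s \<otimes>\<^bsub>W1\<^esub> nw (take k w)) (\<sigma> (w ! k))) [0..<length w]
     = map (act (n s)) (map (\<lambda>k. act (nw (take k w)) (\<sigma> (w ! k))) [0..<length w])"
  proof -
    have "act (n s \<otimes>\<^bsub>W1\<^esub> nw (take k w)) (\<sigma> (w ! k)) = act (n s) (act (nw (take k w)) (\<sigma> (w ! k)))"
      if "k < length w" for k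
    proof -
      have "w ! k \<in> S" using that Cons.prems by auto
      moreover have "set (take k w) \<subseteq> S" using Cons.prems by (meson order_trans set_take_subset set_subset_Cons)
      ultimately show ?thesis using Cons.prems sc by (simp add: act_comp)
    qed
    then show ?thesis by simp
  qed
  also have "mprod M \<dots> = act (n s) (mprod M (map (\<lambda>k. act (nw (take k w)) (\<sigma> (w ! k))) [0..<length w]))"
  proof (rule mprod_act)
    show "n s \<in> carrier W1" using Cons.prems by simp
    show "set (map (\<lambda>k. act (nw (take k w)) (\<sigma> (w ! k))) [0..<length w]) \<subseteq> carrier M"
    proof
      fix x assume "x \<in> set (map (\<lambda>k. act (nw (take k w)) (\<sigma> (w ! k))) [0..<length w])"
      then obtain k where "k < length w" "x = act (nw (take k w)) (\<sigma> (w ! k))" by auto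
      moreover have "w ! k \<in> S" using \<open>k < length w\<close> Cons.prems by auto
      moreover have "set (take k w) \<subseteq> S" using Cons.prems by (meson order_trans set_take_subset set_subset_Cons)
      ultimately show "x \<in> carrier M" using sc by simp
    qed
  qed
  finally show ?case using Cons by simp
qed
end

lemma alt_len[simp]: "length (alt s t m) = m"
  by (induction m arbitrary: s t) auto
lemma alt_set: "s \<in> S \<Longrightarrow> t \<in> S \<Longrightarrow> set (alt s t m) \<subseteq> S"
  by (induction m arbitrary: s t) auto


context
  fixes \<sigma> :: "'w \<Rightarrow> 'm" and \<rho> :: "'g \<Rightarrow> 'm"
  assumes sc: "\<forall>s\<in>S. \<sigma> s \<in> carrier M"
    and rhoZ: "\<rho> \<in> Z1 W1 Om1 M act"
    and c1: "\<forall>s\<in>S. \<sigma> s \<otimes>\<^bsub>M\<^esub> act (n s) (\<sigma> s) = \<rho> (n s \<otimes>\<^bsub>W1\<^esub> n s)"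
    and c2: "\<forall>u\<in>Om1. \<forall>s\<in>S.
           (let us = \<pi> u \<otimes>\<^bsub>W\<^esub> s \<otimes>\<^bsub>W\<^esub> inv\<^bsub>W\<^esub> (\<pi> u);
                tsu = inv\<^bsub>W1\<^esub> u \<otimes>\<^bsub>W1\<^esub> inv\<^bsub>W1\<^esub> (n us) \<otimes>\<^bsub>W1\<^esub> u \<otimes>\<^bsub>W1\<^esub> n s
            in \<rho> u \<otimes>\<^bsub>M\<^esub> act u (\<sigma> s)
                 = \<sigma> us \<otimes>\<^bsub>M\<^esub> act (n us) (\<rho> (u \<otimes>\<^bsub>W1\<^esub> tsu)))"
    and c3: "\<forall>s\<in>S. \<forall>t\<in>S. mcox W s t \<noteq> 0 \<longrightarrow>
           mprod M (map (\<lambda>k. act (mprod W1 (map n (take k (alt s t (mcox W s t)))))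
                                 (\<sigma> (alt s t (mcox W s t) ! k))) [0..<mcox W s t])
         = mprod M (map (\<lambda>k. act (mprod W1 (map n (take k (alt t s (mcox W s t)))))
                                 (\<sigma> (alt t s (mcox W s t) ! k))) [0..<mcox W s t])"
begin

abbreviation Sig where "Sig w \<equiv> sig M act n \<sigma> w"

lemma Sig_c[simp]: "set w \<subseteq> S \<Longrightarrow> Sig w \<in> carrier M" using sig_c[OF sc] .

lemma rho_c[simp]: "u \<in> Om1 \<Longrightarrow> \<rho> u \<in> carrier M"
  using rhoZ by (auto simp: Z1_def)
lemma rho_mult: "u \<in> Om1 \<Longrightarrow> v \<in> Om1 \<Longrightarrow> \<rho> (u \<otimes>\<^bsub>W1\<^esub> v) = \<rho> u \<otimes>\<^bsub>M\<^esub> act u (\<rho> v)"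
  using rhoZ by (auto simp: Z1_def)
lemma rho_one[simp]: "\<rho> \<one>\<^bsub>W1\<^esub> = \<one>\<^bsub>M\<^esub>"
proof -
  have "\<rho> \<one>\<^bsub>W1\<^esub> = \<rho> \<one>\<^bsub>W1\<^esub> \<otimes>\<^bsub>M\<^esub> \<rho> \<one>\<^bsub>W1\<^esub>"
    using rho_mult[of "\<one>\<^bsub>W1\<^esub>" "\<one>\<^bsub>W1\<^esub>"] by simp
  then show ?thesis using rho_c[OF Om1_one] by simp
qed

lemma c2': assumes u: "u \<in> Om1" and s: "s \<in> S"
  shows "\<rho> u \<otimes>\<^bsub>M\<^esub> act u (\<sigma> s) = \<sigma> (\<pi> u \<otimes>\<^bsub>W\<^esub> s \<otimes>\<^bsub>W\<^esub> inv\<^bsub>W\<^esub> (\<pi> u)) \<otimes>\<^bsub>M\<^esub>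
     act (n (\<pi> u \<otimes>\<^bsub>W\<^esub> s \<otimes>\<^bsub>W\<^esub> inv\<^bsub>W\<^esub> (\<pi> u)))
       (\<rho> (inv\<^bsub>W1\<^esub> (n (\<pi> u \<otimes>\<^bsub>W\<^esub> s \<otimes>\<^bsub>W\<^esub> inv\<^bsub>W\<^esub> (\<pi> u))) \<otimes>\<^bsub>W1\<^esub> u \<otimes>\<^bsub>W1\<^esub> n s))"
proof -
  define us where "us = \<pi> u \<otimes>\<^bsub>W\<^esub> s \<otimes>\<^bsub>W\<^esub> inv\<^bsub>W\<^esub> (\<pi> u)"
  have usS: "us \<in> S" using conj_S[OF u s] by (simp add: us_def)
  have uc: "u \<in> carrier W1" using Om1_c[OF u] .
  have "u \<otimes>\<^bsub>W1\<^esub> (inv\<^bsub>W1\<^esub> u \<otimes>\<^bsub>W1\<^esub> inv\<^bsub>W1\<^esub> (n us) \<otimes>\<^bsub>W1\<^esub> u \<otimes>\<^bsub>W1\<^esub> n s)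
      = inv\<^bsub>W1\<^esub> (n us) \<otimes>\<^bsub>W1\<^esub> u \<otimes>\<^bsub>W1\<^esub> n s"
    using uc usS s by (simp add: W1.m_assoc[symmetric])
  moreover have "\<rho> u \<otimes>\<^bsub>M\<^esub> act u (\<sigma> s) = \<sigma> us \<otimes>\<^bsub>M\<^esub> act (n us)
      (\<rho> (u \<otimes>\<^bsub>W1\<^esub> (inv\<^bsub>W1\<^esub> u \<otimes>\<^bsub>W1\<^esub> inv\<^bsub>W1\<^esub> (n us) \<otimes>\<^bsub>W1\<^esub> u \<otimes>\<^bsub>W1\<^esub> n s)))"
    using c2 u s unfolding Let_def us_def by blast
  ultimately show ?thesis by (simp add: us_def)
qed

lemma Gen: "set b \<subseteq> S \<Longrightarrow> u \<in> Om1 \<Longrightarrow> v \<in> Om1 \<Longrightarrow>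
  u \<otimes>\<^bsub>W1\<^esub> nw b = nw (cw u b) \<otimes>\<^bsub>W1\<^esub> v \<Longrightarrow>
  \<rho> u \<otimes>\<^bsub>M\<^esub> act u (Sig b) = Sig (cw u b) \<otimes>\<^bsub>M\<^esub> act (nw (cw u b)) (\<rho> v)"
proof (induction b arbitrary: u)
  case Nil
  then have "v = u" using Om1_c[of u] Om1_c[of v] by simp
  then show ?case using Nil Om1_c[of u] by simp
next
  case (Cons s b)
  have s: "s \<in> S" and b: "set b \<subseteq> S" using Cons.prems by auto
  have u: "u \<in> Om1" and uc: "u \<in> carrier W1" using Cons.prems Om1_c by auto
  have vc: "v \<in> carrier W1" using Cons.prems Om1_c by auto
  define pu where "pu = \<pi> u"
  have puc: "pu \<in> carrier W" using u by (simp add: pu_def)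
  define us where "us = pu \<otimes>\<^bsub>W\<^esub> s \<otimes>\<^bsub>W\<^esub> inv\<^bsub>W\<^esub> pu"
  have usS: "us \<in> S" using conj_S[OF u s] by (simp add: us_def pu_def)
  define u' where "u' = inv\<^bsub>W1\<^esub> (n us) \<otimes>\<^bsub>W1\<^esub> u \<otimes>\<^bsub>W1\<^esub> n s"
  have u'c: "u' \<in> carrier W1" using usS s uc by (simp add: u'_def)
  have e1: "us \<otimes>\<^bsub>W\<^esub> pu = pu \<otimes>\<^bsub>W\<^esub> s" using puc s by (simp add: us_def W.m_assoc)
  have "\<pi> u' = inv\<^bsub>W\<^esub> us \<otimes>\<^bsub>W\<^esub> (pu \<otimes>\<^bsub>W\<^esub> s)"
    using usS s uc by (simp add: u'_def pi.hom_mult pi.hom_inv pu_def W.m_assoc)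
  also have "\<dots> = pu" using e1[symmetric] usS puc by (simp add: W.m_assoc[symmetric])
  finally have pu': "\<pi> u' = pu" .
  have u': "u' \<in> Om1" using Om1_I[OF u'c] pu' Om1_pi[OF u] by (simp add: pu_def)
  have cweq: "cw u' b = cw u b" by (simp add: cw_def pu' pu_def)
  have cwS: "set (cw u b) \<subseteq> S" using cw_S[OF u b] .
  have key: "u \<otimes>\<^bsub>W1\<^esub> n s = n us \<otimes>\<^bsub>W1\<^esub> u'"
    using usS s uc by (simp add: u'_def W1.m_assoc[symmetric])
  have "n us \<otimes>\<^bsub>W1\<^esub> (u' \<otimes>\<^bsub>W1\<^esub> nw b) = n us \<otimes>\<^bsub>W1\<^esub> (nw (cw u b) \<otimes>\<^bsub>W1\<^esub> v)"
  proof -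
    have "n us \<otimes>\<^bsub>W1\<^esub> (u' \<otimes>\<^bsub>W1\<^esub> nw b) = u \<otimes>\<^bsub>W1\<^esub> nw (s # b)"
      using key usS u'c b uc s by (simp add: W1.m_assoc[symmetric])
    also have "\<dots> = nw (cw u (s # b)) \<otimes>\<^bsub>W1\<^esub> v" using Cons.prems by simp
    also have "\<dots> = n us \<otimes>\<^bsub>W1\<^esub> (nw (cw u b) \<otimes>\<^bsub>W1\<^esub> v)"
      using usS cwS vc by (simp add: us_def pu_def W1.m_assoc)
    finally show ?thesis .
  qed
  then have h: "u' \<otimes>\<^bsub>W1\<^esub> nw b = nw (cw u' b) \<otimes>\<^bsub>W1\<^esub> v"
    using usS u'c b cwS vc cweq by simp
  have IH: "\<rho> u' \<otimes>\<^bsub>M\<^esub> act u' (Sig b) = Sig (cw u b) \<otimes>\<^bsub>M\<^esub> act (nw (cw u b)) (\<rho> v)"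
    using Cons.IH[OF b u' Cons.prems(3) h] cweq by simp
  have sM: "\<sigma> s \<in> carrier M" "\<sigma> us \<in> carrier M" using sc s usS by auto
  have c2u: "\<rho> u \<otimes>\<^bsub>M\<^esub> act u (\<sigma> s) = \<sigma> us \<otimes>\<^bsub>M\<^esub> act (n us) (\<rho> u')"
    using c2'[OF u s] by (simp add: u'_def us_def pu_def)
  have "\<rho> u \<otimes>\<^bsub>M\<^esub> act u (Sig (s # b)) = \<rho> u \<otimes>\<^bsub>M\<^esub> act u (\<sigma> s) \<otimes>\<^bsub>M\<^esub> act (u \<otimes>\<^bsub>W1\<^esub> n s) (Sig b)"
    using u uc sM s b by (simp add: act_comp M.m_assoc)
  also have "\<dots> = \<sigma> us \<otimes>\<^bsub>M\<^esub> act (n us) (\<rho> u') \<otimes>\<^bsub>M\<^esub> act (n us \<otimes>\<^bsub>W1\<^esub> u') (Sig b)"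
    using c2u key by simp
  also have "\<dots> = \<sigma> us \<otimes>\<^bsub>M\<^esub> act (n us) (\<rho> u' \<otimes>\<^bsub>M\<^esub> act u' (Sig b))"
    using usS u' u'c sM b by (simp add: act_comp M.m_assoc)
  also have "\<dots> = \<sigma> us \<otimes>\<^bsub>M\<^esub> act (n us) (Sig (cw u b) \<otimes>\<^bsub>M\<^esub> act (nw (cw u b)) (\<rho> v))"
    using IH by simp
  also have "\<dots> = \<sigma> us \<otimes>\<^bsub>M\<^esub> act (n us) (Sig (cw u b)) \<otimes>\<^bsub>M\<^esub> act (n us \<otimes>\<^bsub>W1\<^esub> nw (cw u b)) (\<rho> v)"
    using usS cwS sM Cons.prems(3) by (simp add: act_comp M.m_assoc)
  also have "\<dots> = Sig (cw u (s # b)) \<otimes>\<^bsub>M\<^esub> act (nw (cw u (s # b))) (\<rho> v)"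
    by (simp add: us_def pu_def)
  finally show ?case .
qed


lemma Sig_braid: assumes s: "s \<in> S" and t: "t \<in> S" and m: "mcox W s t \<noteq> 0"
  shows "Sig (alt s t (mcox W s t)) = Sig (alt t s (mcox W s t))"
proof -
  have A: "set (alt s t (mcox W s t)) \<subseteq> S" "set (alt t s (mcox W s t)) \<subseteq> S"
    using alt_set s t by auto
  have E: "mprod M (map (\<lambda>k. act (mprod W1 (map n (take k (alt s t (mcox W s t)))))
                                 (\<sigma> (alt s t (mcox W s t) ! k))) [0..<mcox W s t])
         = mprod M (map (\<lambda>k. act (mprod W1 (map n (take k (alt t s (mcox W s t)))))
                                 (\<sigma> (alt t s (mcox W s t) ! k))) [0..<mcox W s t])"
    using c3 s t m by blast
  show ?thesis using sig_expand[OF sc A(1)] sig_expand[OF sc A(2)] E by simp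
qed

lemma cw_one: "u \<in> Om1 \<Longrightarrow> \<pi> u = \<one>\<^bsub>W\<^esub> \<Longrightarrow> set b \<subseteq> S \<Longrightarrow> cw u b = b"
  unfolding cw_def by (rule map_idI) auto

abbreviation G' where "G' \<equiv> W\<lparr>carrier := Waff\<rparr>"

lemma WD: "cox_equiv G' S w w' \<Longrightarrow> set w \<subseteq> S \<Longrightarrow> v \<in> Om1 \<Longrightarrow>
   nw w = nw w' \<otimes>\<^bsub>W1\<^esub> v \<Longrightarrow> Sig w = Sig w' \<otimes>\<^bsub>M\<^esub> act (nw w') (\<rho> v)"
proof (induction arbitrary: v rule: cox_equiv.induct)
  case (refl w)
  have "nw w \<otimes>\<^bsub>W1\<^esub> \<one>\<^bsub>W1\<^esub> = nw w \<otimes>\<^bsub>W1\<^esub> v" using refl by simp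
  then have "v = \<one>\<^bsub>W1\<^esub>" using Om1_c[of v] refl.prems W1.l_cancel by (metis nw_c W1.one_closed)
  then show ?case using refl.prems by simp
next
  case (sym u w)
  have wS: "set w \<subseteq> S" using sym.prems(1) .
  have uS: "set u \<subseteq> S" using cox_set[OF sym.hyps] wS by simp
  have v: "v \<in> Om1" using sym.prems(2) .
  have vc: "v \<in> carrier W1" using Om1_c[OF v] .
  have e: "nw w = nw u \<otimes>\<^bsub>W1\<^esub> v" using sym.prems(3) .
  have nu: "nw u = nw w \<otimes>\<^bsub>W1\<^esub> inv\<^bsub>W1\<^esub> v" unfolding e using vc uS
    by (simp add: W1.m_assoc)
  have IH: "Sig u = Sig w \<otimes>\<^bsub>M\<^esub> act (nw w) (\<rho> (inv\<^bsub>W1\<^esub> v))"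
    using sym.IH[OF uS Om1_inv[OF v] nu] .
  have "Sig u \<otimes>\<^bsub>M\<^esub> act (nw u) (\<rho> v) = Sig w \<otimes>\<^bsub>M\<^esub> act (nw w) (\<rho> (inv\<^bsub>W1\<^esub> v)) \<otimes>\<^bsub>M\<^esub> act (nw w \<otimes>\<^bsub>W1\<^esub> inv\<^bsub>W1\<^esub> v) (\<rho> v)"
    by (simp only: IH nu)
  also have "\<dots> = Sig w \<otimes>\<^bsub>M\<^esub> act (nw w) (\<rho> (inv\<^bsub>W1\<^esub> v) \<otimes>\<^bsub>M\<^esub> act (inv\<^bsub>W1\<^esub> v) (\<rho> v))"
    using wS vc v by (simp add: act_comp M.m_assoc)
  also have "\<dots> = Sig w \<otimes>\<^bsub>M\<^esub> act (nw w) (\<rho> (inv\<^bsub>W1\<^esub> v \<otimes>\<^bsub>W1\<^esub> v))"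
    using rho_mult[of "inv\<^bsub>W1\<^esub> v" v] v by simp
  also have "\<dots> = Sig w" using vc wS by simp
  finally show ?case by simp
next
  case (trans u w z)
  have uS: "set u \<subseteq> S" using trans.prems(1) .
  have wS: "set w \<subseteq> S" using cox_set[OF trans.hyps(1)] uS by simp
  have zS: "set z \<subseteq> S" using cox_set[OF trans.hyps(2)] wS by simp
  have vc: "v \<in> carrier W1" using trans.prems(2) Om1_c by auto
  define y where "y = inv\<^bsub>W1\<^esub> (nw z) \<otimes>\<^bsub>W1\<^esub> nw w"
  have yc: "y \<in> carrier W1" using wS zS by (simp add: y_def)
  have "mprod W w = mprod W z" using cox_iff[OF wS zS] trans.hyps(2) by simp
  then have "\<pi> y = \<one>\<^bsub>W\<^esub>" using wS zS by (simp add: y_def pi.hom_mult pi.hom_inv)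
  then have y: "y \<in> Om1" using Om1_ker yc by simp
  have ny: "nw w = nw z \<otimes>\<^bsub>W1\<^esub> y" using wS zS by (simp add: y_def W1.m_assoc[symmetric])
  define x where "x = inv\<^bsub>W1\<^esub> y \<otimes>\<^bsub>W1\<^esub> v"
  have x: "x \<in> Om1" using y trans.prems by (simp add: x_def)
  have xc: "x \<in> carrier W1" using x Om1_c by auto
  have yx: "y \<otimes>\<^bsub>W1\<^esub> x = v" using yc vc by (simp add: x_def W1.m_assoc[symmetric])
  have nx: "nw u = nw w \<otimes>\<^bsub>W1\<^esub> x" using trans.prems ny yx zS yc xc
    by (simp add: W1.m_assoc)
  have IH1: "Sig u = Sig w \<otimes>\<^bsub>M\<^esub> act (nw w) (\<rho> x)" using trans.IH(1)[OF uS x nx] .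
  have IH2: "Sig w = Sig z \<otimes>\<^bsub>M\<^esub> act (nw z) (\<rho> y)" using trans.IH(2)[OF wS y ny] .
  have "Sig u = Sig z \<otimes>\<^bsub>M\<^esub> act (nw z) (\<rho> y) \<otimes>\<^bsub>M\<^esub> act (nw z \<otimes>\<^bsub>W1\<^esub> y) (\<rho> x)"
    using IH1 IH2 ny by simp
  also have "\<dots> = Sig z \<otimes>\<^bsub>M\<^esub> act (nw z) (\<rho> y \<otimes>\<^bsub>M\<^esub> act y (\<rho> x))"
    using zS yc x y by (simp add: act_comp M.m_assoc)
  also have "\<dots> = Sig z \<otimes>\<^bsub>M\<^esub> act (nw z) (\<rho> v)"
    using rho_mult[OF y x] yx by simp
  finally show ?case .
next
  case (del s a b)
  have aS: "set a \<subseteq> S" and bS: "set b \<subseteq> S" and s: "s \<in> S" using del.prems(1) by auto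
  have vc: "v \<in> carrier W1" using del.prems(2) Om1_c by auto
  define \<tau> where "\<tau> = n s \<otimes>\<^bsub>W1\<^esub> n s"
  have \<tau>c: "\<tau> \<in> carrier W1" using s by (simp add: \<tau>_def)
  have p\<tau>: "\<pi> \<tau> = \<one>\<^bsub>W\<^esub>" using s ss_one by (simp add: \<tau>_def pi.hom_mult)
  have \<tau>: "\<tau> \<in> Om1" using Om1_ker[OF \<tau>c p\<tau>] .
  have "nw a \<otimes>\<^bsub>W1\<^esub> (\<tau> \<otimes>\<^bsub>W1\<^esub> nw b) = nw a \<otimes>\<^bsub>W1\<^esub> (nw b \<otimes>\<^bsub>W1\<^esub> v)"
  proof -
    have e1: "nw (a @ [s,s] @ b) = nw a \<otimes>\<^bsub>W1\<^esub> nw ([s,s] @ b)" by (rule nw_append) (use aS bS s in auto)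
    have e2: "nw ([s,s] @ b) = \<tau> \<otimes>\<^bsub>W1\<^esub> nw b" using s bS by (simp add: \<tau>_def W1.m_assoc)
    have e3: "nw (a @ b) = nw a \<otimes>\<^bsub>W1\<^esub> nw b" by (rule nw_append[OF aS bS])
    show ?thesis using del.prems(3)[unfolded e1 e2 e3] aS bS vc by (simp add: W1.m_assoc)
  qed
  then have h: "\<tau> \<otimes>\<^bsub>W1\<^esub> nw b = nw (cw \<tau> b) \<otimes>\<^bsub>W1\<^esub> v"
    using aS bS \<tau>c vc cw_one[OF \<tau> p\<tau> bS] by simp
  have G: "\<rho> \<tau> \<otimes>\<^bsub>M\<^esub> act \<tau> (Sig b) = Sig b \<otimes>\<^bsub>M\<^esub> act (nw b) (\<rho> v)"
    using Gen[OF bS \<tau> del.prems(2) h] cw_one[OF \<tau> p\<tau> bS] by simp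
  have "Sig ([s, s] @ b) = \<sigma> s \<otimes>\<^bsub>M\<^esub> act (n s) (\<sigma> s) \<otimes>\<^bsub>M\<^esub> act \<tau> (Sig b)"
    using s sc bS by (simp add: \<tau>_def act_comp M.m_assoc)
  also have "\<dots> = Sig b \<otimes>\<^bsub>M\<^esub> act (nw b) (\<rho> v)" using G c1 s by (simp add: \<tau>_def)
  finally have e: "Sig ([s, s] @ b) = Sig b \<otimes>\<^bsub>M\<^esub> act (nw b) (\<rho> v)" .
  have "Sig (a @ [s, s] @ b) = Sig a \<otimes>\<^bsub>M\<^esub> act (nw a) (Sig b \<otimes>\<^bsub>M\<^esub> act (nw b) (\<rho> v))"
    using sig_append[OF sc aS, of "[s,s] @ b"] e s bS by simp
  also have "\<dots> = Sig (a @ b) \<otimes>\<^bsub>M\<^esub> act (nw (a @ b)) (\<rho> v)"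
    unfolding nw_append[OF aS bS] sig_append[OF sc aS bS] using aS bS del.prems(2) Om1_c
    by (simp add: act_comp M.m_assoc)
  finally show ?case .
next
  case (braid s t a b)
  have aS: "set a \<subseteq> S" and bS: "set b \<subseteq> S" using braid.prems(1) by auto
  have m: "mcox G' s t = mcox W s t" using mcox_sub .
  define k where "k = mcox W s t"
  have k0: "k \<noteq> 0" using braid.hyps(3) m by (simp add: k_def)
  have A: "set (alt s t k) \<subseteq> S" "set (alt t s k) \<subseteq> S"
    using alt_set braid.hyps by auto
  have nweq: "nw (alt s t k) = nw (alt t s k)"
    using braidn braid.hyps(1,2) k0 unfolding k_def by blast
  have e1: "nw (a @ alt s t k @ b) = nw a \<otimes>\<^bsub>W1\<^esub> (nw (alt s t k) \<otimes>\<^bsub>W1\<^esub> nw b)"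
    using aS bS A by (simp only: nw_append set_append Un_subset_iff simp_thms)
  have e2: "nw (a @ alt t s k @ b) = nw a \<otimes>\<^bsub>W1\<^esub> (nw (alt t s k) \<otimes>\<^bsub>W1\<^esub> nw b)"
    using aS bS A by (simp only: nw_append set_append Un_subset_iff simp_thms)
  have NW: "nw (a @ alt s t k @ b) = nw (a @ alt t s k @ b)" unfolding e1 e2 nweq ..
  have w'S: "set (a @ alt t s k @ b) \<subseteq> S" using aS bS A by auto
  have "nw (a @ alt t s k @ b) = nw (a @ alt t s k @ b) \<otimes>\<^bsub>W1\<^esub> v"
    using braid.prems(3) NW unfolding m k_def[symmetric] by simp
  then have v1: "v = \<one>\<^bsub>W1\<^esub>" using W1.l_cancel_one'[OF nw_c[OF w'S] Om1_c[OF braid.prems(2)]] by simp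
  have S1: "Sig (a @ alt s t k @ b) = Sig a \<otimes>\<^bsub>M\<^esub> act (nw a) (Sig (alt s t k) \<otimes>\<^bsub>M\<^esub> act (nw (alt s t k)) (Sig b))"
    using aS bS A by (simp only: sig_append[OF sc] set_append Un_subset_iff simp_thms)
  have S2: "Sig (a @ alt t s k @ b) = Sig a \<otimes>\<^bsub>M\<^esub> act (nw a) (Sig (alt t s k) \<otimes>\<^bsub>M\<^esub> act (nw (alt t s k)) (Sig b))"
    using aS bS A by (simp only: sig_append[OF sc] set_append Un_subset_iff simp_thms)
  have "Sig (a @ alt s t k @ b) = Sig (a @ alt t s k @ b)"
    unfolding S1 S2 nweq using Sig_braid[OF braid.hyps(1,2)] k0 by (simp add: k_def)
  then show ?case unfolding m k_def[symmetric] v1 rho_one act_one[OF nw_c[OF w'S]] using Sig_c[OF w'S] by simp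
qed


lemma Phi_unique:
  assumes wS: "set w \<subseteq> S" and w'S: "set w' \<subseteq> S" and u: "u \<in> Om1" and u': "u' \<in> Om1"
    and e: "nw w \<otimes>\<^bsub>W1\<^esub> u = nw w' \<otimes>\<^bsub>W1\<^esub> u'"
  shows "Sig w \<otimes>\<^bsub>M\<^esub> act (nw w) (\<rho> u) = Sig w' \<otimes>\<^bsub>M\<^esub> act (nw w') (\<rho> u')"
proof -
  have uc: "u \<in> carrier W1" "u' \<in> carrier W1" using u u' Om1_c by auto
  have "\<pi> (nw w \<otimes>\<^bsub>W1\<^esub> u) = \<pi> (nw w' \<otimes>\<^bsub>W1\<^esub> u')" using e by simp
  then have "mprod W w \<otimes>\<^bsub>W\<^esub> \<pi> u = mprod W w' \<otimes>\<^bsub>W\<^esub> \<pi> u'"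
    using wS w'S uc by (simp add: pi.hom_mult)
  then have mw: "mprod W w = mprod W w'"
    using waff_unique mprodW_Waff[OF wS] mprodW_Waff[OF w'S] Om1_pi[OF u] Om1_pi[OF u'] by blast
  have ce: "cox_equiv G' S w w'" using cox_iff[OF wS w'S] mw by simp
  define v where "v = inv\<^bsub>W1\<^esub> (nw w') \<otimes>\<^bsub>W1\<^esub> nw w"
  have vc: "v \<in> carrier W1" using wS w'S by (simp add: v_def)
  have "\<pi> v = \<one>\<^bsub>W\<^esub>" using wS w'S mw by (simp add: v_def pi.hom_mult pi.hom_inv)
  then have v: "v \<in> Om1" using Om1_ker vc by simp
  have nv: "nw w = nw w' \<otimes>\<^bsub>W1\<^esub> v" using wS w'S by (simp add: v_def W1.m_assoc[symmetric])
  have WDi: "Sig w = Sig w' \<otimes>\<^bsub>M\<^esub> act (nw w') (\<rho> v)" using WD[OF ce wS v nv] .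
  have "nw w' \<otimes>\<^bsub>W1\<^esub> (v \<otimes>\<^bsub>W1\<^esub> u) = nw w' \<otimes>\<^bsub>W1\<^esub> u'"
    using e nv w'S vc uc by (simp add: W1.m_assoc)
  then have vu: "v \<otimes>\<^bsub>W1\<^esub> u = u'" using w'S vc uc by simp
  have "Sig w \<otimes>\<^bsub>M\<^esub> act (nw w) (\<rho> u) = Sig w' \<otimes>\<^bsub>M\<^esub> act (nw w') (\<rho> v) \<otimes>\<^bsub>M\<^esub> act (nw w' \<otimes>\<^bsub>W1\<^esub> v) (\<rho> u)"
    by (simp only: WDi nv)
  also have "\<dots> = Sig w' \<otimes>\<^bsub>M\<^esub> act (nw w') (\<rho> v \<otimes>\<^bsub>M\<^esub> act v (\<rho> u))"
    using w'S vc v u by (simp add: act_comp M.m_assoc)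
  also have "\<dots> = Sig w' \<otimes>\<^bsub>M\<^esub> act (nw w') (\<rho> u')"
    using rho_mult[OF v u] vu by simp
  finally show ?thesis .
qed

definition phi where "phi g = (SOME x. \<exists>w u. set w \<subseteq> S \<and> u \<in> Om1 \<and> g = nw w \<otimes>\<^bsub>W1\<^esub> u \<and>
   x = Sig w \<otimes>\<^bsub>M\<^esub> act (nw w) (\<rho> u))"

lemma phi_eq: assumes "set w \<subseteq> S" "u \<in> Om1" "g = nw w \<otimes>\<^bsub>W1\<^esub> u"
  shows "phi g = Sig w \<otimes>\<^bsub>M\<^esub> act (nw w) (\<rho> u)"
proof -
  let ?P = "\<lambda>x. \<exists>w u. set w \<subseteq> S \<and> u \<in> Om1 \<and> g = nw w \<otimes>\<^bsub>W1\<^esub> u \<and>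
   x = Sig w \<otimes>\<^bsub>M\<^esub> act (nw w) (\<rho> u)"
  have "?P (Sig w \<otimes>\<^bsub>M\<^esub> act (nw w) (\<rho> u))" using assms by blast
  then have "?P (phi g)" unfolding phi_def by (rule someI)
  then obtain w' u' where "set w' \<subseteq> S" "u' \<in> Om1" "g = nw w' \<otimes>\<^bsub>W1\<^esub> u'"
    "phi g = Sig w' \<otimes>\<^bsub>M\<^esub> act (nw w') (\<rho> u')" by blast
  then show ?thesis using Phi_unique[of w' w u' u] assms by simp
qed

lemma phi_c: "g \<in> carrier W1 \<Longrightarrow> phi g \<in> carrier M"
proof -
  assume "g \<in> carrier W1"
  then obtain w u where "set w \<subseteq> S" "u \<in> Om1" "g = nw w \<otimes>\<^bsub>W1\<^esub> u" using decomp by blast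
  then show ?thesis using phi_eq Om1_c by simp
qed

lemma phi_nS: "s \<in> S \<Longrightarrow> phi (n s) = \<sigma> s"
  using phi_eq[of "[s]" "\<one>\<^bsub>W1\<^esub>" "n s"] sc by simp

lemma phi_Om: "u \<in> Om1 \<Longrightarrow> phi u = \<rho> u"
  using phi_eq[of "[]" u u] Om1_c[of u] by simp

lemma phi_cocycle: assumes g: "g \<in> carrier W1" and g': "g' \<in> carrier W1"
  shows "phi (g \<otimes>\<^bsub>W1\<^esub> g') = phi g \<otimes>\<^bsub>M\<^esub> act g (phi g')"
proof -
  obtain w u where wS: "set w \<subseteq> S" and u: "u \<in> Om1" and ge: "g = nw w \<otimes>\<^bsub>W1\<^esub> u"
    using decomp[OF g] by blast
  obtain w' u' where w'S: "set w' \<subseteq> S" and u': "u' \<in> Om1" and g'e: "g' = nw w' \<otimes>\<^bsub>W1\<^esub> u'"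
    using decomp[OF g'] by blast
  have uc: "u \<in> carrier W1" "u' \<in> carrier W1" using u u' Om1_c by auto
  define c where "c = cw u w'"
  have cS: "set c \<subseteq> S" using cw_S[OF u w'S] by (simp add: c_def)
  define v where "v = inv\<^bsub>W1\<^esub> (nw c) \<otimes>\<^bsub>W1\<^esub> u \<otimes>\<^bsub>W1\<^esub> nw w'"
  have vc: "v \<in> carrier W1" using cS w'S uc by (simp add: v_def)
  have pu: "\<pi> u \<in> carrier W" using u by simp
  have mw': "mprod W w' \<in> carrier W" using w'S by simp
  have "\<pi> v = inv\<^bsub>W\<^esub> (\<pi> u \<otimes>\<^bsub>W\<^esub> mprod W w' \<otimes>\<^bsub>W\<^esub> inv\<^bsub>W\<^esub> (\<pi> u)) \<otimes>\<^bsub>W\<^esub> (\<pi> u \<otimes>\<^bsub>W\<^esub> mprod W w')"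
    using cS w'S uc mprod_cw[OF u w'S] by (simp add: v_def c_def pi.hom_mult pi.hom_inv W.m_assoc)
  also have "\<dots> = \<pi> u"
  proof -
    have h: "inv\<^bsub>W\<^esub> (\<pi> u) \<otimes>\<^bsub>W\<^esub> (\<pi> u \<otimes>\<^bsub>W\<^esub> mprod W w') = mprod W w'"
      using pu mw' by (simp add: W.m_assoc[symmetric])
    show ?thesis using pu mw' by (simp add: W.inv_mult_group W.m_assoc h)
  qed
  finally have "\<pi> v = \<pi> u" .
  then have v: "v \<in> Om1" using Om1_I[OF vc] Om1_pi[OF u] by simp
  have key: "u \<otimes>\<^bsub>W1\<^esub> nw w' = nw c \<otimes>\<^bsub>W1\<^esub> v"
    using cS w'S uc by (simp add: v_def W1.m_assoc[symmetric])
  have G: "\<rho> u \<otimes>\<^bsub>M\<^esub> act u (Sig w') = Sig c \<otimes>\<^bsub>M\<^esub> act (nw c) (\<rho> v)"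
    using Gen[OF w'S u v] key by (simp add: c_def)
  have wc: "set (w @ c) \<subseteq> S" using wS cS by simp
  have gg: "g \<otimes>\<^bsub>W1\<^esub> g' = nw (w @ c) \<otimes>\<^bsub>W1\<^esub> (v \<otimes>\<^bsub>W1\<^esub> u')"
  proof -
    have "g \<otimes>\<^bsub>W1\<^esub> g' = nw w \<otimes>\<^bsub>W1\<^esub> (u \<otimes>\<^bsub>W1\<^esub> nw w') \<otimes>\<^bsub>W1\<^esub> u'"
      using ge g'e wS w'S uc by (simp add: W1.m_assoc)
    also have "\<dots> = nw w \<otimes>\<^bsub>W1\<^esub> nw c \<otimes>\<^bsub>W1\<^esub> (v \<otimes>\<^bsub>W1\<^esub> u')"
      unfolding key using wS cS vc uc by (simp add: W1.m_assoc)
    also have "\<dots> = nw (w @ c) \<otimes>\<^bsub>W1\<^esub> (v \<otimes>\<^bsub>W1\<^esub> u')" by (simp only: nw_append[OF wS cS])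
    finally show ?thesis .
  qed
  have vu': "v \<otimes>\<^bsub>W1\<^esub> u' \<in> Om1" using v u' by simp
  have L: "phi (g \<otimes>\<^bsub>W1\<^esub> g') = Sig w \<otimes>\<^bsub>M\<^esub> act (nw w) (Sig c) \<otimes>\<^bsub>M\<^esub> act (nw w \<otimes>\<^bsub>W1\<^esub> nw c) (\<rho> (v \<otimes>\<^bsub>W1\<^esub> u'))"
    using phi_eq[OF wc vu' gg] by (simp only: sig_append[OF sc wS cS] nw_append[OF wS cS])
  have "phi g \<otimes>\<^bsub>M\<^esub> act g (phi g') = Sig w \<otimes>\<^bsub>M\<^esub> act (nw w) (\<rho> u) \<otimes>\<^bsub>M\<^esub>
      act (nw w \<otimes>\<^bsub>W1\<^esub> u) (Sig w' \<otimes>\<^bsub>M\<^esub> act (nw w') (\<rho> u'))"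
    using phi_eq[OF wS u ge] phi_eq[OF w'S u' g'e] ge by simp
  also have "\<dots> = Sig w \<otimes>\<^bsub>M\<^esub> act (nw w) (\<rho> u \<otimes>\<^bsub>M\<^esub> act u (Sig w') \<otimes>\<^bsub>M\<^esub> act (u \<otimes>\<^bsub>W1\<^esub> nw w') (\<rho> u'))"
    using wS w'S uc u u' by (simp add: act_comp M.m_assoc)
  also have "\<dots> = Sig w \<otimes>\<^bsub>M\<^esub> act (nw w) (Sig c \<otimes>\<^bsub>M\<^esub> act (nw c) (\<rho> v) \<otimes>\<^bsub>M\<^esub> act (nw c \<otimes>\<^bsub>W1\<^esub> v) (\<rho> u'))"
    by (simp only: G key)
  also have "\<dots> = Sig w \<otimes>\<^bsub>M\<^esub> act (nw w) (Sig c \<otimes>\<^bsub>M\<^esub> act (nw c) (\<rho> v \<otimes>\<^bsub>M\<^esub> act v (\<rho> u')))"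
    using cS vc v u' by (simp add: act_comp M.m_assoc)
  also have "\<dots> = Sig w \<otimes>\<^bsub>M\<^esub> act (nw w) (Sig c \<otimes>\<^bsub>M\<^esub> act (nw c) (\<rho> (v \<otimes>\<^bsub>W1\<^esub> u')))"
    by (simp only: rho_mult[OF v u'])
  also have "\<dots> = phi (g \<otimes>\<^bsub>W1\<^esub> g')"
    unfolding L using wS cS vu' by (simp add: act_comp M.m_assoc)
  finally show ?thesis ..
qed

lemma phiZ: "restrict phi (carrier W1) \<in> Z1 W1 (carrier W1) M act"
  unfolding Z1_def using phi_c phi_cocycle by auto

end

lemma u'_Om1: assumes u: "u \<in> Om1" and s: "s \<in> S"
  shows "inv\<^bsub>W1\<^esub> (n (\<pi> u \<otimes>\<^bsub>W\<^esub> s \<otimes>\<^bsub>W\<^esub> inv\<^bsub>W\<^esub> (\<pi> u))) \<otimes>\<^bsub>W1\<^esub> u \<otimes>\<^bsub>W1\<^esub> n s \<in> Om1"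
proof -
  have uc: "u \<in> carrier W1" using Om1_c[OF u] .
  define pu where "pu = \<pi> u"
  have puc: "pu \<in> carrier W" using u by (simp add: pu_def)
  define us where "us = pu \<otimes>\<^bsub>W\<^esub> s \<otimes>\<^bsub>W\<^esub> inv\<^bsub>W\<^esub> pu"
  have usS: "us \<in> S" using conj_S[OF u s] by (simp add: us_def pu_def)
  define u' where "u' = inv\<^bsub>W1\<^esub> (n us) \<otimes>\<^bsub>W1\<^esub> u \<otimes>\<^bsub>W1\<^esub> n s"
  have u'c: "u' \<in> carrier W1" using usS s uc by (simp add: u'_def)
  have e1: "us \<otimes>\<^bsub>W\<^esub> pu = pu \<otimes>\<^bsub>W\<^esub> s" using puc s by (simp add: us_def W.m_assoc)
  have "\<pi> u' = inv\<^bsub>W\<^esub> us \<otimes>\<^bsub>W\<^esub> (pu \<otimes>\<^bsub>W\<^esub> s)"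
    using usS s uc by (simp add: u'_def pi.hom_mult pi.hom_inv pu_def W.m_assoc)
  also have "\<dots> = pu" using e1[symmetric] usS puc by (simp add: W.m_assoc[symmetric])
  finally have pu': "\<pi> u' = pu" .
  have "u' \<in> Om1" using Om1_I[OF u'c] pu' Om1_pi[OF u] by (simp add: pu_def)
  then show ?thesis by (simp add: u'_def us_def pu_def)
qed

context
  fixes \<phi> assumes phiZ: "\<phi> \<in> Z1 W1 (carrier W1) M act"
begin
lemma phic: "g \<in> carrier W1 \<Longrightarrow> \<phi> g \<in> carrier M" using phiZ by (auto simp: Z1_def)
lemma phim: "g \<in> carrier W1 \<Longrightarrow> h \<in> carrier W1 \<Longrightarrow> \<phi> (g \<otimes>\<^bsub>W1\<^esub> h) = \<phi> g \<otimes>\<^bsub>M\<^esub> act g (\<phi> h)"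
  using phiZ by (auto simp: Z1_def)
lemma phi1: "\<phi> \<one>\<^bsub>W1\<^esub> = \<one>\<^bsub>M\<^esub>"
proof -
  have "\<phi> \<one>\<^bsub>W1\<^esub> = \<phi> \<one>\<^bsub>W1\<^esub> \<otimes>\<^bsub>M\<^esub> \<phi> \<one>\<^bsub>W1\<^esub>"
    using phim[of "\<one>\<^bsub>W1\<^esub>" "\<one>\<^bsub>W1\<^esub>"] phic[of "\<one>\<^bsub>W1\<^esub>"] by simp
  then show ?thesis using phic[of "\<one>\<^bsub>W1\<^esub>"] by simp
qed
lemma phi_nw: "set w \<subseteq> S \<Longrightarrow> \<phi> (nw w) = sig M act n (\<lambda>s\<in>S. \<phi> (n s)) w"
  by (induction w) (auto simp: phi1 phim)

lemma phi_det: "set w \<subseteq> S \<Longrightarrow> u \<in> Om1 \<Longrightarrow>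
   \<phi> (nw w \<otimes>\<^bsub>W1\<^esub> u) = sig M act n (\<lambda>s\<in>S. \<phi> (n s)) w \<otimes>\<^bsub>M\<^esub> act (nw w) ((\<lambda>u\<in>Om1. \<phi> u) u)"
  using phim[of "nw w" u] Om1_c[of u] phi_nw by simp
end

lemma inj_part: assumes "\<phi> \<in> Z1 W1 (carrier W1) M act" "\<psi> \<in> Z1 W1 (carrier W1) M act"
  and "(\<lambda>s\<in>S. \<phi> (n s)) = (\<lambda>s\<in>S. \<psi> (n s))" and "(\<lambda>u\<in>Om1. \<phi> u) = (\<lambda>u\<in>Om1. \<psi> u)"
  shows "\<phi> = \<psi>"
proof (rule extensionalityI)
  show "\<phi> \<in> extensional (carrier W1)" "\<psi> \<in> extensional (carrier W1)"
    using assms(1,2) by (auto simp: Z1_def PiE_def)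
  fix g assume g: "g \<in> carrier W1"
  obtain w u where "set w \<subseteq> S" "u \<in> Om1" "g = nw w \<otimes>\<^bsub>W1\<^esub> u" using decomp[OF g] by blast
  then show "\<phi> g = \<psi> g" using phi_det[OF assms(1)] phi_det[OF assms(2)] assms(3,4) by simp
qed

lemma nec: assumes phiZ: "\<phi> \<in> Z1 W1 (carrier W1) M act"
  defines "\<sigma> \<equiv> (\<lambda>s\<in>S. \<phi> (n s))" and "\<rho> \<equiv> (\<lambda>u\<in>Om1. \<phi> u)"
  shows "\<sigma> \<in> S \<rightarrow>\<^sub>E carrier M \<and> \<rho> \<in> Z1 W1 Om1 M act \<and>
        (\<forall>s\<in>S. \<sigma> s \<otimes>\<^bsub>M\<^esub> act (n s) (\<sigma> s) = \<rho> (n s \<otimes>\<^bsub>W1\<^esub> n s)) \<and>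
        (\<forall>u\<in>Om1. \<forall>s\<in>S.
           (let us = \<pi> u \<otimes>\<^bsub>W\<^esub> s \<otimes>\<^bsub>W\<^esub> inv\<^bsub>W\<^esub> (\<pi> u);
                tsu = inv\<^bsub>W1\<^esub> u \<otimes>\<^bsub>W1\<^esub> inv\<^bsub>W1\<^esub> (n us) \<otimes>\<^bsub>W1\<^esub> u \<otimes>\<^bsub>W1\<^esub> n s
            in \<rho> u \<otimes>\<^bsub>M\<^esub> act u (\<sigma> s)
                 = \<sigma> us \<otimes>\<^bsub>M\<^esub> act (n us) (\<rho> (u \<otimes>\<^bsub>W1\<^esub> tsu)))) \<and>
        (\<forall>s\<in>S. \<forall>t\<in>S. mcox W s t \<noteq> 0 \<longrightarrow>
           mprod M (map (\<lambda>k. act (mprod W1 (map n (take k (alt s t (mcox W s t)))))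
                                 (\<sigma> (alt s t (mcox W s t) ! k))) [0..<mcox W s t])
         = mprod M (map (\<lambda>k. act (mprod W1 (map n (take k (alt t s (mcox W s t)))))
                                 (\<sigma> (alt t s (mcox W s t) ! k))) [0..<mcox W s t]))"
proof (intro conjI ballI allI impI)
  have sc: "\<forall>s\<in>S. \<sigma> s \<in> carrier M" using phic[OF phiZ] by (simp add: \<sigma>_def)
  show "\<sigma> \<in> S \<rightarrow>\<^sub>E carrier M" using sc by (simp add: \<sigma>_def)
  show "\<rho> \<in> Z1 W1 Om1 M act"
    unfolding Z1_def \<rho>_def using phic[OF phiZ] phim[OF phiZ] Om1_c by auto
  fix s assume s: "s \<in> S"
  have ss: "n s \<otimes>\<^bsub>W1\<^esub> n s \<in> Om1" using Om1_ker[of "n s \<otimes>\<^bsub>W1\<^esub> n s"] s ss_one by (simp add: pi.hom_mult)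
  show "\<sigma> s \<otimes>\<^bsub>M\<^esub> act (n s) (\<sigma> s) = \<rho> (n s \<otimes>\<^bsub>W1\<^esub> n s)"
    using s ss phim[OF phiZ, of "n s" "n s"] by (simp add: \<sigma>_def \<rho>_def)
next
  fix u s assume u: "u \<in> Om1" and s: "s \<in> S"
  have uc: "u \<in> carrier W1" using Om1_c[OF u] .
  define us where "us = \<pi> u \<otimes>\<^bsub>W\<^esub> s \<otimes>\<^bsub>W\<^esub> inv\<^bsub>W\<^esub> (\<pi> u)"
  have usS: "us \<in> S" using conj_S[OF u s] by (simp add: us_def)
  define u' where "u' = inv\<^bsub>W1\<^esub> (n us) \<otimes>\<^bsub>W1\<^esub> u \<otimes>\<^bsub>W1\<^esub> n s"
  have u': "u' \<in> Om1" using u'_Om1[OF u s] by (simp add: u'_def us_def)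
  have u'c: "u' \<in> carrier W1" using Om1_c[OF u'] .
  have ut: "u \<otimes>\<^bsub>W1\<^esub> (inv\<^bsub>W1\<^esub> u \<otimes>\<^bsub>W1\<^esub> inv\<^bsub>W1\<^esub> (n us) \<otimes>\<^bsub>W1\<^esub> u \<otimes>\<^bsub>W1\<^esub> n s) = u'"
    using uc usS s by (simp add: W1.m_assoc[symmetric] u'_def)
  have key: "u \<otimes>\<^bsub>W1\<^esub> n s = n us \<otimes>\<^bsub>W1\<^esub> u'"
    using usS s uc by (simp add: u'_def W1.m_assoc[symmetric])
  have "\<rho> u \<otimes>\<^bsub>M\<^esub> act u (\<sigma> s) = \<phi> (u \<otimes>\<^bsub>W1\<^esub> n s)"
    using u s uc phim[OF phiZ, of u "n s"] by (simp add: \<sigma>_def \<rho>_def)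
  also have "\<dots> = \<sigma> us \<otimes>\<^bsub>M\<^esub> act (n us) (\<rho> u')"
    unfolding key using usS u' u'c phim[OF phiZ, of "n us" u'] by (simp add: \<sigma>_def \<rho>_def)
  finally show "let us = \<pi> u \<otimes>\<^bsub>W\<^esub> s \<otimes>\<^bsub>W\<^esub> inv\<^bsub>W\<^esub> (\<pi> u);
                tsu = inv\<^bsub>W1\<^esub> u \<otimes>\<^bsub>W1\<^esub> inv\<^bsub>W1\<^esub> (n us) \<otimes>\<^bsub>W1\<^esub> u \<otimes>\<^bsub>W1\<^esub> n s
            in \<rho> u \<otimes>\<^bsub>M\<^esub> act u (\<sigma> s)
                 = \<sigma> us \<otimes>\<^bsub>M\<^esub> act (n us) (\<rho> (u \<otimes>\<^bsub>W1\<^esub> tsu))"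
    unfolding Let_def us_def[symmetric] ut .
next
  fix s t assume s: "s \<in> S" and t: "t \<in> S" and m: "mcox W s t \<noteq> 0"
  have sc: "\<forall>s\<in>S. \<sigma> s \<in> carrier M" using phic[OF phiZ] by (simp add: \<sigma>_def)
  have A: "set (alt s t (mcox W s t)) \<subseteq> S" "set (alt t s (mcox W s t)) \<subseteq> S"
    using alt_set s t by auto
  have "sig M act n \<sigma> (alt s t (mcox W s t)) = sig M act n \<sigma> (alt t s (mcox W s t))"
    using phi_nw[OF phiZ A(1)] phi_nw[OF phiZ A(2)] braidn[rule_format, OF s t m] by (simp add: \<sigma>_def)
  then show "mprod M (map (\<lambda>k. act (mprod W1 (map n (take k (alt s t (mcox W s t)))))
                                 (\<sigma> (alt s t (mcox W s t) ! k))) [0..<mcox W s t])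
         = mprod M (map (\<lambda>k. act (mprod W1 (map n (take k (alt t s (mcox W s t)))))
                                 (\<sigma> (alt t s (mcox W s t) ! k))) [0..<mcox W s t])"
    using sig_expand[OF sc A(1)] sig_expand[OF sc A(2)] by simp
qed

end
theorem lemma2p2p1:
  fixes W1 :: "('g, 'c) monoid_scheme" and W :: "('w, 'd) monoid_scheme"
    and M :: "('m, 'e) monoid_scheme"
    and Waff S \<Omega> :: "'w set" and T :: "'g set"
    and \<pi> :: "'g \<Rightarrow> 'w" and n :: "'w \<Rightarrow> 'g" and act :: "'g \<Rightarrow> 'm \<Rightarrow> 'm"
  assumes "pro_p_coxeter W1 W Waff S \<Omega> T \<pi> n"
    and "group M"
    and "aut_action W1 M act"
  defines "\<Omega>1 \<equiv> {g \<in> carrier W1. \<pi> g \<in> \<Omega>}"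
  defines "res \<equiv> (\<lambda>\<phi>. ((\<lambda>s\<in>S. \<phi> (n s)), (\<lambda>u\<in>\<Omega>1. \<phi> u)))"
  shows "inj_on res (Z1 W1 (carrier W1) M act) \<and>
    res ` Z1 W1 (carrier W1) M act =
      {(\<sigma>, \<rho>). \<sigma> \<in> S \<rightarrow>\<^sub>E carrier M \<and> \<rho> \<in> Z1 W1 \<Omega>1 M act \<and>
        (\<forall>s\<in>S. \<sigma> s \<otimes>\<^bsub>M\<^esub> act (n s) (\<sigma> s) = \<rho> (n s \<otimes>\<^bsub>W1\<^esub> n s)) \<and>
        (\<forall>u\<in>\<Omega>1. \<forall>s\<in>S.
           (let us = \<pi> u \<otimes>\<^bsub>W\<^esub> s \<otimes>\<^bsub>W\<^esub> inv\<^bsub>W\<^esub> (\<pi> u);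
                tsu = inv\<^bsub>W1\<^esub> u \<otimes>\<^bsub>W1\<^esub> inv\<^bsub>W1\<^esub> (n us) \<otimes>\<^bsub>W1\<^esub> u \<otimes>\<^bsub>W1\<^esub> n s
            in \<rho> u \<otimes>\<^bsub>M\<^esub> act u (\<sigma> s)
                 = \<sigma> us \<otimes>\<^bsub>M\<^esub> act (n us) (\<rho> (u \<otimes>\<^bsub>W1\<^esub> tsu)))) \<and>
        (\<forall>s\<in>S. \<forall>t\<in>S. mcox W s t \<noteq> 0 \<longrightarrow>
           mprod M (map (\<lambda>k. act (mprod W1 (map n (take k (alt s t (mcox W s t)))))
                                 (\<sigma> (alt s t (mcox W s t) ! k))) [0..<mcox W s t])
         = mprod M (map (\<lambda>k. act (mprod W1 (map n (take k (alt t s (mcox W s t)))))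
                                 (\<sigma> (alt t s (mcox W s t) ! k))) [0..<mcox W s t]))}"
proof -
  note A = assms(1)[unfolded pro_p_coxeter_def ext_coxeter_def]
  have hom: "group_hom W1 W \<pi>" using A by (simp add: group_hom_def group_hom_axioms_def)
  have "base W1 W M \<pi> Waff S \<Omega> n act"
    unfolding base_def base_axioms_def using A hom assms(2,3) normal_imp_subgroup by auto
  then interpret B: base W1 W M \<pi> Waff S \<Omega> n act .
  have O: "\<Omega>1 = B.Om1" by (simp add: \<Omega>1_def B.Om1_def)
  show ?thesis
  proof (intro conjI)
    show "inj_on res (Z1 W1 (carrier W1) M act)"
    proof (rule inj_onI)
      fix \<phi> \<psi> assume p: "\<phi> \<in> Z1 W1 (carrier W1) M act" and q: "\<psi> \<in> Z1 W1 (carrier W1) M act"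
        and e: "res \<phi> = res \<psi>"
      from e have "(\<lambda>s\<in>S. \<phi> (n s)) = (\<lambda>s\<in>S. \<psi> (n s))" "(\<lambda>u\<in>B.Om1. \<phi> u) = (\<lambda>u\<in>B.Om1. \<psi> u)"
        unfolding res_def O by auto
      then show "\<phi> = \<psi>" using B.inj_part[OF p q] by blast
    qed
  next
    show "res ` Z1 W1 (carrier W1) M act = {(\<sigma>, \<rho>). \<sigma> \<in> S \<rightarrow>\<^sub>E carrier M \<and> \<rho> \<in> Z1 W1 \<Omega>1 M act \<and>
        (\<forall>s\<in>S. \<sigma> s \<otimes>\<^bsub>M\<^esub> act (n s) (\<sigma> s) = \<rho> (n s \<otimes>\<^bsub>W1\<^esub> n s)) \<and>
        (\<forall>u\<in>\<Omega>1. \<forall>s\<in>S.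
           (let us = \<pi> u \<otimes>\<^bsub>W\<^esub> s \<otimes>\<^bsub>W\<^esub> inv\<^bsub>W\<^esub> (\<pi> u);
                tsu = inv\<^bsub>W1\<^esub> u \<otimes>\<^bsub>W1\<^esub> inv\<^bsub>W1\<^esub> (n us) \<otimes>\<^bsub>W1\<^esub> u \<otimes>\<^bsub>W1\<^esub> n s
            in \<rho> u \<otimes>\<^bsub>M\<^esub> act u (\<sigma> s)
                 = \<sigma> us \<otimes>\<^bsub>M\<^esub> act (n us) (\<rho> (u \<otimes>\<^bsub>W1\<^esub> tsu)))) \<and>
        (\<forall>s\<in>S. \<forall>t\<in>S. mcox W s t \<noteq> 0 \<longrightarrow>
           mprod M (map (\<lambda>k. act (mprod W1 (map n (take k (alt s t (mcox W s t)))))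
                                 (\<sigma> (alt s t (mcox W s t) ! k))) [0..<mcox W s t])
         = mprod M (map (\<lambda>k. act (mprod W1 (map n (take k (alt t s (mcox W s t)))))
                                 (\<sigma> (alt t s (mcox W s t) ! k))) [0..<mcox W s t]))}"
      (is "_ = ?R")
    proof
      show "res ` Z1 W1 (carrier W1) M act \<subseteq> ?R"
      proof
        fix x assume "x \<in> res ` Z1 W1 (carrier W1) M act"
        then obtain \<phi> where p: "\<phi> \<in> Z1 W1 (carrier W1) M act" and x: "x = res \<phi>" by blast
        show "x \<in> ?R" unfolding x res_def O mem_Collect_eq case_prod_conv by (rule B.nec[OF p])
      qed
    next
      show "?R \<subseteq> res ` Z1 W1 (carrier W1) M act"
      proof
        fix x assume "x \<in> ?R"
        then obtain \<sigma> \<rho> where x: "x = (\<sigma>, \<rho>)" and sE: "\<sigma> \<in> S \<rightarrow>\<^sub>E carrier M"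
          and rZ: "\<rho> \<in> Z1 W1 B.Om1 M act"
          and c1: "\<forall>s\<in>S. \<sigma> s \<otimes>\<^bsub>M\<^esub> act (n s) (\<sigma> s) = \<rho> (n s \<otimes>\<^bsub>W1\<^esub> n s)"
          and c2: "\<forall>u\<in>B.Om1. \<forall>s\<in>S.
           (let us = \<pi> u \<otimes>\<^bsub>W\<^esub> s \<otimes>\<^bsub>W\<^esub> inv\<^bsub>W\<^esub> (\<pi> u);
                tsu = inv\<^bsub>W1\<^esub> u \<otimes>\<^bsub>W1\<^esub> inv\<^bsub>W1\<^esub> (n us) \<otimes>\<^bsub>W1\<^esub> u \<otimes>\<^bsub>W1\<^esub> n s
            in \<rho> u \<otimes>\<^bsub>M\<^esub> act u (\<sigma> s)
                 = \<sigma> us \<otimes>\<^bsub>M\<^esub> act (n us) (\<rho> (u \<otimes>\<^bsub>W1\<^esub> tsu)))"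
          and c3: "\<forall>s\<in>S. \<forall>t\<in>S. mcox W s t \<noteq> 0 \<longrightarrow>
           mprod M (map (\<lambda>k. act (mprod W1 (map n (take k (alt s t (mcox W s t)))))
                                 (\<sigma> (alt s t (mcox W s t) ! k))) [0..<mcox W s t])
         = mprod M (map (\<lambda>k. act (mprod W1 (map n (take k (alt t s (mcox W s t)))))
                                 (\<sigma> (alt t s (mcox W s t) ! k))) [0..<mcox W s t])"
          unfolding O by blast
        have sc: "\<forall>s\<in>S. \<sigma> s \<in> carrier M" using sE by auto
        define \<phi> where "\<phi> = restrict (B.phi \<sigma> \<rho>) (carrier W1)"
        have pZ: "\<phi> \<in> Z1 W1 (carrier W1) M act"
          unfolding \<phi>_def by (rule B.phiZ[OF sc rZ c1 c2 c3])
        have r1: "(\<lambda>s\<in>S. \<phi> (n s)) = \<sigma>"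
        proof
          fix s show "(\<lambda>s\<in>S. \<phi> (n s)) s = \<sigma> s"
            using B.phi_nS[OF sc rZ c1 c2 c3, of s] sE by (auto simp: \<phi>_def PiE_def extensional_def)
        qed
        have r2: "(\<lambda>u\<in>B.Om1. \<phi> u) = \<rho>"
        proof
          fix u show "(\<lambda>u\<in>B.Om1. \<phi> u) u = \<rho> u"
            using B.phi_Om[OF sc rZ c1 c2 c3, of u] rZ B.Om1_c[of u]
            by (auto simp: \<phi>_def Z1_def PiE_def extensional_def)
        qed
        have "res \<phi> = x" unfolding res_def O x r1 r2 ..
        then show "x \<in> res ` Z1 W1 (carrier W1) M act" using pZ by blast
      qed
    qed
  qed
qed

end
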